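(* Let $t \ge 2$ and $G = K_{m_1} \otimes \cdots \otimes K_{m_t}$ with $m_i \geq 3$ for all $i$. Then $$\dim(G) \geq \max_{1 \le j \le t} \dim\Big(\bigotimes_{i \ne j} K_{m_i}\Big),$$ where $\bigotimes_{i\ne j} K_{m_i}$ is the tensor product of the $t-1$ cliques obtained by omitting the $j$-th factor.
   Context: $K_r$ is the complete graph on $r$ vertices. The tensor product of graphs has vertex set the Cartesian product of vertex sets, with $(a_1,\dots,a_t)$ adjacent to $(b_1,\dots,b_t)$ iff $a_ib_i$ is an edge of the $i$-th factor for every $i$ (a product with a single factor is that factor). For a connected graph and an ordered set $W=\{w_1,\dots,w_k\}$ of vertices, $r(v\mid W)=(d(v,w_1),\dots,d(v,w_k))$; $W$ is resolving if distinct vertices have distinct representations; $\dim(G)$ is the minimum size of a resolving set. *)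

theory Defs
  imports Main
begin

type_synonym 'a graph = "'a set \<times> ('a \<Rightarrow> 'a \<Rightarrow> bool)"

definition verts :: "'a graph \<Rightarrow> 'a set" where "verts G = fst G"
definition adj :: "'a graph \<Rightarrow> 'a \<Rightarrow> 'a \<Rightarrow> bool" where "adj G = snd G"

definition walk_of_length :: "'a graph \<Rightarrow> nat \<Rightarrow> 'a \<Rightarrow> 'a \<Rightarrow> bool" where
  "walk_of_length G n u v \<longleftrightarrow>
     (\<exists>p. length p = Suc n \<and> hd p = u \<and> last p = v \<and> set p \<subseteq> verts G \<and>
          (\<forall>i<n. adj G (p ! i) (p ! Suc i)))"

text \<open>Graph distance (shortest walk length); meaningful for connected graphs.\<close>
definition gdist :: "'a graph \<Rightarrow> 'a \<Rightarrow> 'a \<Rightarrow> nat" where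
  "gdist G u v = (LEAST n. walk_of_length G n u v)"

definition connected_graph :: "'a graph \<Rightarrow> bool" where
  "connected_graph G \<longleftrightarrow> (\<forall>u\<in>verts G. \<forall>v\<in>verts G. \<exists>n. walk_of_length G n u v)"

definition resolving :: "'a graph \<Rightarrow> 'a set \<Rightarrow> bool" where
  "resolving G W \<longleftrightarrow> W \<subseteq> verts G \<and>
     (\<forall>u\<in>verts G. \<forall>v\<in>verts G. (\<forall>w\<in>W. gdist G u w = gdist G v w) \<longrightarrow> u = v)"

definition metric_dim :: "'a graph \<Rightarrow> nat" where
  "metric_dim G = (LEAST k. \<exists>W. finite W \<and> card W = k \<and> resolving G W)"

definition complete_graph :: "nat \<Rightarrow> nat graph" where
  "complete_graph r = ({0..<r}, \<lambda>a b. a < r \<and> b < r \<and> a \<noteq> b)"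

definition tensor_prod :: "'a graph list \<Rightarrow> 'a list graph" where
  "tensor_prod Gs =
     ({xs. length xs = length Gs \<and> (\<forall>i<length Gs. xs ! i \<in> verts (Gs ! i))},
      \<lambda>xs ys. length xs = length Gs \<and> length ys = length Gs \<and>
              (\<forall>i<length Gs. adj (Gs ! i) (xs ! i) (ys ! i)))"

definition clique_tensor :: "nat list \<Rightarrow> nat list graph" where
  "clique_tensor ms = tensor_prod (map complete_graph ms)"

definition omit :: "nat \<Rightarrow> 'b list \<Rightarrow> 'b list" where
  "omit j xs = take j xs @ drop (Suc j) xs"

end

theory Submission
  imports Defs
begin

definition cat :: "nat list \<Rightarrow> nat list \<Rightarrow> nat" where
  "cat x y = (if x = y then 0 else if (\<forall>i<length x. x!i \<noteq> y!i) then 1 else 2)"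

lemma verts_ct: "verts (clique_tensor ms) = {xs. length xs = length ms \<and> (\<forall>i<length ms. xs!i < ms!i)}"
  by (simp add: clique_tensor_def tensor_prod_def verts_def complete_graph_def)

lemma adj_ct: "adj (clique_tensor ms) x y = (length x = length ms \<and> length y = length ms \<and>
   (\<forall>i<length ms. x!i < ms!i \<and> y!i < ms!i \<and> x!i \<noteq> y!i))"
  by (simp add: clique_tensor_def tensor_prod_def adj_def complete_graph_def)

lemma walk0: "walk_of_length G 0 x y \<longleftrightarrow> x = y \<and> x \<in> verts G"
proof
  assume "walk_of_length G 0 x y"
  then obtain p where p: "length p = Suc 0" "hd p = x" "last p = y" "set p \<subseteq> verts G"
    unfolding walk_of_length_def by auto
  then obtain a where "p = [a]" by (auto simp: length_Suc_conv)
  with p show "x = y \<and> x \<in> verts G" by auto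
next
  assume "x = y \<and> x \<in> verts G"
  then show "walk_of_length G 0 x y" unfolding walk_of_length_def
    by (intro exI[of _ "[x]"]) auto
qed

lemma walk1: "walk_of_length G 1 x y \<Longrightarrow> adj G x y"
proof -
  assume "walk_of_length G 1 x y"
  then obtain p where p: "length p = Suc 1" "hd p = x" "last p = y" "\<forall>i<1. adj G (p ! i) (p ! Suc i)"
    unfolding walk_of_length_def by blast
  then obtain a b where "p = [a,b]" by (auto simp: length_Suc_conv)
  with p show ?thesis by auto
qed

lemma walk1I: "x \<in> verts G \<Longrightarrow> y \<in> verts G \<Longrightarrow> adj G x y \<Longrightarrow> walk_of_length G 1 x y"
  unfolding walk_of_length_def by (intro exI[of _ "[x,y]"]) auto

lemma walk2I: "x \<in> verts G \<Longrightarrow> y \<in> verts G \<Longrightarrow> z \<in> verts G \<Longrightarrow> adj G x z \<Longrightarrow> adj G z y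
   \<Longrightarrow> walk_of_length G 2 x y"
  unfolding walk_of_length_def
  apply (intro exI[of _ "[x,z,y]"])
  apply (auto simp: less_Suc_eq numeral_2_eq_2)
  done

lemma gdist_ct:
  assumes "length ms \<ge> 1" "\<forall>i<length ms. ms!i \<ge> 3"
    and x: "x \<in> verts (clique_tensor ms)" and y: "y \<in> verts (clique_tensor ms)"
  shows "gdist (clique_tensor ms) x y = cat x y"
proof -
  let ?G = "clique_tensor ms"
  have lx: "length x = length ms" and ly: "length y = length ms" using x y by (auto simp: verts_ct)
  show ?thesis
  proof (cases "x = y")
    case True
    then have "walk_of_length ?G 0 x y" using x by (simp add: walk0)
    then show ?thesis using True unfolding gdist_def cat_def by (simp add: Least_eq_0)
  next
    case ne: False
    show ?thesis
    proof (cases "\<forall>i<length x. x!i \<noteq> y!i")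
      case True
      have "adj ?G x y" using True x y lx by (auto simp: adj_ct verts_ct)
      then have w: "walk_of_length ?G 1 x y" using x y by (rule walk1I[rotated 2])
      have "gdist ?G x y = 1" unfolding gdist_def
      proof (rule Least_equality[where P="\<lambda>n. walk_of_length ?G n x y", OF w])
        fix m assume "walk_of_length ?G m x y"
        then show "1 \<le> m" using ne by (cases m) (auto simp: walk0)
      qed
      then show ?thesis using True ne by (simp add: cat_def)
    next
      case False
      define z where "z = map (\<lambda>i. if x!i \<noteq> 0 \<and> y!i \<noteq> 0 then 0 else if x!i \<noteq> 1 \<and> y!i \<noteq> 1 then 1 else 2::nat) [0..<length ms]"
      have zv: "z \<in> verts ?G" using assms(2) by (fastforce simp: z_def verts_ct)
      have a1: "adj ?G x z" using x zv by (auto simp: adj_ct verts_ct z_def)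
      have a2: "adj ?G z y" using y zv by (auto simp: adj_ct verts_ct z_def)
      have w: "walk_of_length ?G 2 x y" using walk2I[OF x y zv a1 a2] .
      have "gdist ?G x y = 2" unfolding gdist_def
      proof (rule Least_equality[where P="\<lambda>n. walk_of_length ?G n x y", OF w])
        fix m assume wm: "walk_of_length ?G m x y"
        show "2 \<le> m"
        proof (rule ccontr)
          assume "\<not> 2 \<le> m"
          then have "m = 0 \<or> m = 1" by auto
          then show False
          proof
            assume "m = 0" then show False using wm ne by (simp add: walk0)
          next
            assume "m = 1" then have "adj ?G x y" using wm walk1 by simp
            then show False using False lx by (auto simp: adj_ct)
          qed
        qed
      qed
      then show ?thesis using False ne by (simp add: cat_def)
    qed
  qed
qed

lemma length_omit: "j < length xs \<Longrightarrow> length (omit j xs) = length xs - 1"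
  by (simp add: omit_def)

lemma nth_omit: "j < length xs \<Longrightarrow> i < length xs - 1 \<Longrightarrow>
   omit j xs ! i = xs ! (if i < j then i else Suc i)"
  by (auto simp: omit_def nth_append min_def)

lemma omit_eq: "length x = length y \<Longrightarrow> j < length x \<Longrightarrow>
   (x = y) = (x!j = y!j \<and> omit j x = omit j y)"
proof -
  assume l: "length x = length y" and j: "j < length x"
  have dx: "x = take j x @ x!j # drop (Suc j) x" using j by (simp add: Cons_nth_drop_Suc)
  have dy: "y = take j y @ y!j # drop (Suc j) y" using j l by (simp add: Cons_nth_drop_Suc)
  show ?thesis
  proof
    assume "x!j = y!j \<and> omit j x = omit j y"
    then have "x!j = y!j" "take j x @ drop (Suc j) x = take j y @ drop (Suc j) y"
      by (auto simp: omit_def)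
    moreover have "length (take j x) = length (take j y)" using l by simp
    ultimately have "take j x = take j y" "drop (Suc j) x = drop (Suc j) y"
      by (auto simp: append_eq_append_conv)
    then show "x = y" using dx dy \<open>x!j = y!j\<close> by metis
  qed simp
qed

lemma omit_alldiff:
  assumes "length x = length y" "j < length x"
  shows "(\<forall>i<length x. x!i \<noteq> y!i) = (x!j \<noteq> y!j \<and> (\<forall>i<length (omit j x). omit j x!i \<noteq> omit j y!i))"
proof
  assume h: "\<forall>i<length x. x!i \<noteq> y!i"
  then show "x!j \<noteq> y!j \<and> (\<forall>i<length (omit j x). omit j x!i \<noteq> omit j y!i)"
    using assms by (auto simp: length_omit nth_omit)
next
  assume h: "x!j \<noteq> y!j \<and> (\<forall>i<length (omit j x). omit j x!i \<noteq> omit j y!i)"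
  show "\<forall>i<length x. x!i \<noteq> y!i"
  proof (intro allI impI)
    fix i assume i: "i < length x"
    consider "i = j" | "i < j" | "i > j" by linarith
    then show "x!i \<noteq> y!i"
    proof cases
      case 1 then show ?thesis using h by simp
    next
      case 2
      then have "omit j x ! i \<noteq> omit j y ! i" using h assms i by (auto simp: length_omit)
      then show ?thesis using 2 assms i by (simp add: nth_omit)
    next
      case 3
      then have "omit j x ! (i-1) \<noteq> omit j y ! (i-1)" using h assms i by (auto simp: length_omit)
      moreover have "\<not> (i - 1 < j)" "Suc (i-1) = i" using 3 by auto
      ultimately show ?thesis using 3 assms i by (simp add: nth_omit)
    qed
  qed
qed

lemma verts_omit:
  assumes j: "j < length ms"
  shows "x \<in> verts (clique_tensor ms) \<longleftrightarrow>
     length x = length ms \<and> x!j < ms!j \<and> omit j x \<in> verts (clique_tensor (omit j ms))"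
proof
  assume "x \<in> verts (clique_tensor ms)"
  then show "length x = length ms \<and> x!j < ms!j \<and> omit j x \<in> verts (clique_tensor (omit j ms))"
    using j by (auto simp: verts_ct length_omit nth_omit)
next
  assume h: "length x = length ms \<and> x!j < ms!j \<and> omit j x \<in> verts (clique_tensor (omit j ms))"
  have h2: "\<forall>i<length ms - 1. omit j x ! i < omit j ms ! i" using h j by (auto simp: verts_ct length_omit)
  show "x \<in> verts (clique_tensor ms)" unfolding verts_ct
  proof (safe)
    show "length x = length ms" using h by simp
    fix i assume i: "i < length ms"
    consider "i = j" | "i < j" | "i > j" by linarith
    then show "x!i < ms!i"
    proof cases
      case 1 then show ?thesis using h by simp
    next
      case 2
      then have "omit j x ! i < omit j ms ! i" using h2 i j by auto
      then show ?thesis using 2 h i j by (simp add: nth_omit)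
    next
      case 3
      then have "omit j x ! (i-1) < omit j ms ! (i-1)" using h2 i j by auto
      moreover have "\<not> (i - 1 < j)" "Suc (i-1) = i" using 3 by auto
      ultimately show ?thesis using 3 h i j by (simp add: nth_omit)
    qed
  qed
qed

definition ins :: "nat \<Rightarrow> nat \<Rightarrow> nat list \<Rightarrow> nat list" where
  "ins j a u = take j u @ a # drop j u"

lemma ins_props: "j \<le> length u \<Longrightarrow> length (ins j a u) = Suc (length u) \<and> ins j a u ! j = a \<and> omit j (ins j a u) = u"
  by (auto simp: ins_def omit_def nth_append min_def)

lemma finite_verts: "finite (verts (clique_tensor ms))"
proof -
  have "verts (clique_tensor ms) \<subseteq> {xs. set xs \<subseteq> {0..<sum_list ms} \<and> length xs = length ms}"
  proof
    fix x assume "x \<in> verts (clique_tensor ms)"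
    then have l: "length x = length ms" and b: "\<forall>i<length ms. x!i < ms!i" by (auto simp: verts_ct)
    have "set x \<subseteq> {0..<sum_list ms}"
    proof
      fix a assume "a \<in> set x"
      then obtain i where i: "i < length x" "a = x!i" by (auto simp: in_set_conv_nth)
      have "ms!i \<le> sum_list ms" using i l by (simp add: member_le_sum_list)
      then show "a \<in> {0..<sum_list ms}" using b i l by force
    qed
    then show "x \<in> {xs. set xs \<subseteq> {0..<sum_list ms} \<and> length xs = length ms}" using l by simp
  qed
  then show ?thesis using finite_lists_length_eq[of "{0..<sum_list ms}" "length ms"] finite_subset by blast
qed

lemma exists_resolving:
  assumes "length ms \<ge> 1" "\<forall>i<length ms. ms!i \<ge> 3"
  shows "resolving (clique_tensor ms) (verts (clique_tensor ms))"
  unfolding resolving_def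
proof (intro conjI ballI impI subset_refl)
  fix u v assume u: "u \<in> verts (clique_tensor ms)" and v: "v \<in> verts (clique_tensor ms)"
    and h: "\<forall>w\<in>verts (clique_tensor ms). gdist (clique_tensor ms) u w = gdist (clique_tensor ms) v w"
  then have "cat u u = cat v u" using gdist_ct[OF assms] by metis
  then show "u = v" by (auto simp: cat_def split: if_splits)
qed

lemma main_j:
  assumes "length ms \<ge> 2" "\<forall>i<length ms. ms!i \<ge> 3" and j: "j < length ms"
    and W: "resolving (clique_tensor ms) W"
  shows "resolving (clique_tensor (omit j ms)) (omit j ` W)"
proof -
  let ?G = "clique_tensor ms" and ?H = "clique_tensor (omit j ms)"
  have a1: "length ms \<ge> 1" using assms by simp
  have a2: "length (omit j ms) \<ge> 1" "\<forall>i<length (omit j ms). omit j ms!i \<ge> 3"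
    using assms by (auto simp: length_omit nth_omit)
  have Wv: "W \<subseteq> verts ?G" using W by (simp add: resolving_def)
  show ?thesis unfolding resolving_def
  proof (intro conjI ballI impI)
    show "omit j ` W \<subseteq> verts ?H" using Wv verts_omit[OF j] by blast
    fix u' v' assume u': "u' \<in> verts ?H" and v': "v' \<in> verts ?H"
      and h: "\<forall>w\<in>omit j ` W. gdist ?H u' w = gdist ?H v' w"
    show "u' = v'"
    proof (rule ccontr)
      assume ne: "u' \<noteq> v'"
      have lu: "length u' = length ms - 1" using u' j by (simp add: verts_ct length_omit)
      have lv: "length v' = length ms - 1" using v' j by (simp add: verts_ct length_omit)
      define u where "u = ins j 0 u'"
      define v where "v = ins j 0 v'"
      have pu: "length u = length ms" "u!j = 0" "omit j u = u'"
        using ins_props[of j u' 0] lu j unfolding u_def by auto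
      have pv: "length v = length ms" "v!j = 0" "omit j v = v'"
        using ins_props[of j v' 0] lv j unfolding v_def by auto
      have j0: "0 < ms!j" using assms(2) j by force
      have uG: "u \<in> verts ?G" using verts_omit[OF j] pu u' j0 by auto
      have vG: "v \<in> verts ?G" using verts_omit[OF j] pv v' j0 by auto
      have "u \<noteq> v" using pu pv ne by auto
      then obtain w where w: "w \<in> W" and d: "gdist ?G u w \<noteq> gdist ?G v w"
        using W uG vG unfolding resolving_def by blast
      have wG: "w \<in> verts ?G" using w Wv by auto
      have wH: "omit j w \<in> verts ?H" using wG verts_omit[OF j] by auto
      have lw: "length w = length ms" using wG by (simp add: verts_ct)
      have dc: "cat u w \<noteq> cat v w" using d gdist_ct[OF a1 assms(2)] uG vG wG by metis
      have h2: "cat u' (omit j w) = cat v' (omit j w)"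
        using h w gdist_ct[OF a2] u' v' wH by (metis image_eqI)
      have ju: "j < length u" using pu j by simp
      have jv: "j < length v" using pv j by simp
      have eu: "(u = w) = (u!j = w!j \<and> u' = omit j w)" using omit_eq[of u w j] pu lw ju by simp
      have ev: "(v = w) = (v!j = w!j \<and> v' = omit j w)" using omit_eq[of v w j] pv lw jv by simp
      have du: "(\<forall>i<length u. u!i \<noteq> w!i) = (u!j \<noteq> w!j \<and> (\<forall>i<length u'. u'!i \<noteq> omit j w!i))"
        using omit_alldiff[of u w j] pu lw ju by simp
      have dv: "(\<forall>i<length v. v!i \<noteq> w!i) = (v!j \<noteq> w!j \<and> (\<forall>i<length v'. v'!i \<noteq> omit j w!i))"
        using omit_alldiff[of v w j] pv lw jv by simp
      have lu1: "length u' \<ge> 1" "length v' \<ge> 1" using lu lv assms(1) by auto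
      have nz: "\<And>a::nat list. length a \<ge> 1 \<Longrightarrow> \<not> (\<forall>i<length a. a!i \<noteq> a!i)" by (metis less_le_trans zero_less_one)
      show False
        using dc h2 eu ev du dv pu(2) pv(2) nz[OF lu1(1)] nz[OF lu1(2)]
        unfolding cat_def by (auto split: if_splits)
    qed
  qed
qed

theorem proposition2p4:
  fixes ms :: "nat list"
  assumes "length ms \<ge> 2"
    and "\<forall>i<length ms. ms ! i \<ge> 3"
  shows "metric_dim (clique_tensor ms)
           \<ge> Max ((\<lambda>j. metric_dim (clique_tensor (omit j ms))) ` {..<length ms})"
proof -
  let ?G = "clique_tensor ms"
  have ex: "\<exists>k W. finite W \<and> card W = k \<and> resolving ?G W"
    using exists_resolving[of ms] assms finite_verts by auto
  obtain W where W: "finite W" "card W = metric_dim ?G" "resolving ?G W"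
    using LeastI_ex[OF ex] unfolding metric_dim_def by blast
  have "\<forall>j\<in>{..<length ms}. metric_dim (clique_tensor (omit j ms)) \<le> metric_dim ?G"
  proof
    fix j assume "j \<in> {..<length ms}"
    then have j: "j < length ms" by simp
    have r: "resolving (clique_tensor (omit j ms)) (omit j ` W)" using main_j[OF assms j W(3)] .
    have "metric_dim (clique_tensor (omit j ms)) \<le> card (omit j ` W)"
      unfolding metric_dim_def by (rule Least_le) (use r W(1) in auto)
    also have "\<dots> \<le> card W" using W(1) by (rule card_image_le)
    finally show "metric_dim (clique_tensor (omit j ms)) \<le> metric_dim ?G" using W(2) by simp
  qed
  then show ?thesis using assms(1) by (subst Max_le_iff) (auto simp: lessThan_empty_iff)
qed

end
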